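(* Let $N\ge 2$ vehicles, with positions $x_1(t),\dots,x_N(t)$, travel without overtaking on a ring road of length $L>0$; vehicle $N$ is the platoon leader, and vehicle $1$ is the vehicle directly ahead of the leader around the ring, at distance $x_1+L-x_N$. Let $a>0$, and let $V$ be an optimal velocity function, differentiable at $h=L/N$ with $V'(h)>0$. Suppose the dynamics are $$\ddot{x}_i(t)=a\left[V\!\left(\frac{x_N(t)-x_i(t)}{N-i}\right)-\dot{x}_i(t)\right],\qquad i=1,\dots,N-1,$$ $$\ddot{x}_N(t)=a\left[V\big(x_1(t)+L-x_N(t)\big)-\dot{x}_N(t)\right].$$ Then this system is linearly stable about the uniform-flow equilibrium $e_i(t)=hi+V(h)t$ for every $a>0$. No condition on $a$ beyond positivity is needed.
   Context: Write $x_i(t)=e_i(t)+y_i(t)$ and linearize the system in the small perturbations $y_i$. The system is called linearly stable if every characteristic root $\lambda$ of this linearized system, i.e. every $\lambda$ admitting a solution of the form $y_i(t)=\xi_i e^{\lambda t}$ with $(\xi_1,\dots,\xi_N)\neq 0$, satisfies $\operatorname{Re}\lambda<0$. The single exception is the root $\lambda=0$, which corresponds to uniform translations $y_1=\dots=y_N=\text{const}$, i.e. perturbations that leave all spacings unchanged. *)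

theory Defs
  imports "HOL-Analysis.Analysis"
begin

text \<open>Linearization of
  x_i'' = a [V((x_N - x_i)/(N-i)) - x_i']  (i < N),
  x_N'' = a [V(x_1 + L - x_N) - x_N']
about the uniform flow e_i(t) = h i + V(h) t, h = L/N, where all headway arguments
equal h.  With Vp = V'(h), the perturbations y_i = x_i - e_i satisfy
  y_i'' = a [Vp (y_N - y_i)/(N-i) - y_i']  (i < N),
  y_N'' = a [Vp (y_1 - y_N) - y_N'].\<close>

definition lin_rhs :: "real \<Rightarrow> real \<Rightarrow> nat \<Rightarrow> (nat \<Rightarrow> complex) \<Rightarrow> (nat \<Rightarrow> complex) \<Rightarrow> nat \<Rightarrow> complex" where
  "lin_rhs a Vp N y v i =
     (if i < N then complex_of_real a * (complex_of_real Vp * (y N - y i) / complex_of_real (real N - real i) - v i)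
      else complex_of_real a * (complex_of_real Vp * (y 1 - y N) - v N))"

text \<open>lambda is a characteristic root iff y_i(t) = xi_i e^{lambda t}, xi nonzero, solves the
linearized system, i.e. lambda^2 xi_i = rhs(xi, lambda xi)_i for i = 1..N.\<close>

definition char_root :: "real \<Rightarrow> real \<Rightarrow> nat \<Rightarrow> complex \<Rightarrow> bool" where
  "char_root a Vp N lam \<longleftrightarrow>
     (\<exists>\<xi> :: nat \<Rightarrow> complex. (\<exists>i\<in>{1..N}. \<xi> i \<noteq> 0) \<and>
        (\<forall>i\<in>{1..N}. lam\<^sup>2 * \<xi> i = lin_rhs a Vp N \<xi> (\<lambda>i. lam * \<xi> i) i))"

definition linearly_stable :: "real \<Rightarrow> real \<Rightarrow> nat \<Rightarrow> bool" where
  "linearly_stable a Vp N \<longleftrightarrow> (\<forall>lam. char_root a Vp N lam \<longrightarrow> lam = 0 \<or> Re lam < 0)"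

end

theory Submission
  imports Defs
begin

lemma quad_re_neg:
  fixes l :: complex and a c :: real
  assumes "l^2 + of_real a * l + of_real c = 0" "a > 0" "c > 0"
  shows "Re l < 0"
proof -
  have re: "Re l ^ 2 - Im l ^ 2 + a * Re l + c = 0" and im: "2 * Re l * Im l + a * Im l = 0"
    using assms(1) by (simp_all add: complex_eq_iff power2_eq_square algebra_simps)
  show ?thesis
  proof (cases "Im l = 0")
    case True
    with re have "Re l ^ 2 + a * Re l + c = 0" by simp
    then show ?thesis using assms(2,3)
      by (smt (verit) mult_nonneg_nonneg zero_le_power2)
  next
    case False
    from im have "Im l * (2 * Re l + a) = 0" by (simp add: algebra_simps)
    with False have "2 * Re l + a = 0" by simp
    then show ?thesis using assms(2) by simp
  qed
qed

theorem theorem3p2: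
  fixes N :: nat and L a :: real and V :: "real \<Rightarrow> real" and Vp :: real
  assumes "N \<ge> 2" and "L > 0" and "a > 0"
    and "(V has_real_derivative Vp) (at (L / real N))" and "Vp > 0"
  shows "linearly_stable a Vp N"
  unfolding linearly_stable_def
proof (intro allI impI)
  fix lam assume "char_root a Vp N lam"
  then obtain \<xi> where nz: "\<exists>i\<in>{1..N}. \<xi> i \<noteq> 0"
    and eq: "\<forall>i\<in>{1..N}. lam\<^sup>2 * \<xi> i = lin_rhs a Vp N \<xi> (\<lambda>i. lam * \<xi> i) i"
    unfolding char_root_def by blast
  show "lam = 0 \<or> Re lam < 0"
  proof (rule ccontr)
    assume "\<not> (lam = 0 \<or> Re lam < 0)"
    hence l0: "lam \<noteq> 0" and lre: "Re lam \<ge> 0" by auto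
    define A where "A = complex_of_real a"
    define P where "P = complex_of_real Vp"
    have quadnz: "lam^2 + A * lam + A * P / of_real k \<noteq> 0" if "k > 0" for k :: real
    proof
      assume "lam^2 + A * lam + A * P / of_real k = 0"
      hence "lam^2 + of_real a * lam + of_real (a * Vp / k) = 0" by (simp add: A_def P_def)
      hence "Re lam < 0" using quad_re_neg assms(3,5) that by (meson divide_pos_pos mult_pos_pos)
      with lre show False by simp
    qed
    have xN: "\<xi> N \<noteq> 0"
    proof
      assume z: "\<xi> N = 0"
      have "\<xi> i = 0" if "i \<in> {1..N}" for i
      proof (cases "i < N")
        case True
        define k where "k = real N - real i"
        have kp: "k > 0" using True by (simp add: k_def)
        have "lam\<^sup>2 * \<xi> i = A * (P * (0 - \<xi> i) / of_real k - lam * \<xi> i)"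
          using eq that True z by (simp add: lin_rhs_def A_def P_def k_def)
        hence "(lam^2 + A * lam + A * P / of_real k) * \<xi> i = 0"
          using kp by (simp add: field_simps)
        then show ?thesis using quadnz[OF kp] by simp
      next
        case False
        then show ?thesis using that z by simp
      qed
      with nz show False by blast
    qed
    define m where "m = real N - 1"
    have mp: "m \<ge> 1" using assms(1) by (simp add: m_def)
    have E1: "lam\<^sup>2 * \<xi> 1 = A * (P * (\<xi> N - \<xi> 1) / of_real m - lam * \<xi> 1)"
      using eq assms(1) by (auto simp: lin_rhs_def A_def P_def m_def)
    have EN: "lam\<^sup>2 * \<xi> N = A * (P * (\<xi> 1 - \<xi> N) - lam * \<xi> N)"
      using eq assms(1) by (auto simp: lin_rhs_def A_def P_def)
    define w where "w = lam * (lam + A)"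
    have mnz: "(of_real m :: complex) \<noteq> 0" using mp by simp
    have h1: "A * P * \<xi> 1 = (w + A * P) * \<xi> N"
      using EN by (simp add: w_def algebra_simps power2_eq_square)
    have h2: "(of_real m * w + A * P) * \<xi> 1 = A * P * \<xi> N"
    proof -
      have "of_real m * (lam\<^sup>2 * \<xi> 1) = of_real m * (A * (P * (\<xi> N - \<xi> 1) / of_real m - lam * \<xi> 1))"
        using E1 by simp
      also have "\<dots> = A * P * (\<xi> N - \<xi> 1) - of_real m * A * lam * \<xi> 1"
        using mnz by (simp add: field_simps)
      finally show ?thesis by (simp add: w_def algebra_simps power2_eq_square)
    qed
    have "(of_real m * w + A * P) * (w + A * P) * \<xi> N = (A * P) * (A * P) * \<xi> N"
      by (metis h1 h2 mult.assoc mult.commute)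
    hence "w * (of_real m * w + A * P * (of_real m + 1)) * \<xi> N = 0"
      by (simp add: algebra_simps)
    with xN have "w = 0 \<or> of_real m * w + A * P * (of_real m + 1) = 0" by simp
    thus False
    proof
      assume "w = 0"
      hence "lam + A = 0" using l0 by (simp add: w_def)
      hence "Re lam = - a" by (simp add: A_def complex_eq_iff)
      thus False using lre assms(3) by simp
    next
      assume h: "of_real m * w + A * P * (of_real m + 1) = 0"
      have "lam^2 + of_real a * lam + of_real (a * Vp * (m + 1) / m) = 0"
      proof -
        have "lam^2 + A * lam + A * P * (of_real m + 1) / of_real m = 0"
          using h mnz by (simp add: field_simps w_def power2_eq_square)
        thus ?thesis by (simp add: A_def P_def)
      qed
      moreover have "a * Vp * (m + 1) / m > 0" using assms(3,5) mp by simp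
      ultimately have "Re lam < 0" using quad_re_neg assms(3) by blast
      thus False using lre by simp
    qed
  qed
qed

end
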